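(* Let $\mathcal{A}$ be an order--invariant oblivious streaming algorithm that, for any $\epsilon\in(0,1)$ and $\delta\in(0,1)$, uses $M(\epsilon,\delta)$ space and, on any fixed stream of at most $m$ updates, outputs a correct solution to the $(f,\epsilon)$--estimation problem with probability at least $1-\delta$, where $f$ has range contained in $\{0\}\cup[1,\alpha]$ for an integer $\alpha\ge2$. Then for any $\epsilon\in(0,1)$, any $\delta\in(0,1/10)$ and any $k\ge0$, there is a robust streaming algorithm for the $(f,\epsilon)$--estimation problem in the Bounded--Memory Adversary Model with $k$ bits of persistent memory that succeeds with probability at least $1-\delta$ and uses $M(\epsilon/3,1/10)\cdot O\!\left(2^k\cdot\frac{\log\alpha}{\epsilon}\cdot\log m+\log(1/\delta)\right)$ space.
   Context: Fix $n,m$ and $f:\mathbb{Z}^n\to\{0\}\cup[1,\alpha]$. For $x,y\ge0$, $y$ is a $(1+\epsilon)$--multiplicative approximation to $x$ if $x\le y<(1+\epsilon)x$; the $(f,\epsilon)$--estimation problem on $v\in\mathbb{Z}^n$ asks for such an approximation to $f(v)$. A stream of updates is a sequence $(i_j,\Delta_j)\in[n]\times\{-1,1\}$, accumulating into frequency vectors $v^{(j)}$ with $v^{(j)}_i=\sum_{j'\le j,\,i_{j'}=i}\Delta_{j'}$. An oblivious streaming algorithm is given $\epsilon$ and an upper bound $m$ on the stream length, processes $t\le m$ updates, and then outputs a solution to the $(f,\epsilon)$--estimation problem on $v^{(t)}$. Such an algorithm with random seed $\rho$ is order--invariant if for any two streams $S_1,S_2$ of length at most $m$ accumulating to the same frequency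 vector, and any seed $\rho$, its memory state after processing $S_1$ equals that after processing $S_2$. Bounded--Memory Adversary Model: a game of $m$ rounds between an Adversary and an Algorithm. The Adversary has a persistent memory of at most $k$ bits (read/write, retained across rounds), a read-only estimate memory containing the most recent estimate $y_{j-1}$ (empty in round 1), an unbounded working memory erased after each round, and fresh random bits each round that are discarded afterwards. In round $j$ the Adversary computes $(i_j,\Delta_j)$ as a function only of the fresh randomness, the persistent memory and the estimate memory (and may rewrite the persistent memory); the Algorithm receives the update and outputs $y_j$, which overwrites the estimate memory. The Algorithm succeeds if for every $j\in[m]$, $y_j$ is a $(1+\epsilon)$--multiplicative approximation to $f(v^{(j)})$. *)

theory Defs
  imports "HOL-Probability.Probability"
begin

text \<open>Streams: updates are pairs (i, Delta) with i < n and Delta in {-1,1}.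
  Frequency vectors in Z^n are represented as functions nat => int (zero outside [n]).\<close>

definition valid_update :: "nat \<Rightarrow> nat \<times> int \<Rightarrow> bool" where
  "valid_update n u \<longleftrightarrow> fst u < n \<and> (snd u = 1 \<or> snd u = -1)"

definition valid_stream :: "nat \<Rightarrow> nat \<Rightarrow> (nat \<times> int) list \<Rightarrow> bool" where
  "valid_stream n m s \<longleftrightarrow> length s \<le> m \<and> (\<forall>u\<in>set s. valid_update n u)"

definition freq :: "(nat \<times> int) list \<Rightarrow> nat \<Rightarrow> int" where
  "freq s i = sum_list (map snd (filter (\<lambda>u. fst u = i) s))"

definition mult_approx :: "real \<Rightarrow> real \<Rightarrow> real \<Rightarrow> bool" where
  "mult_approx eps x y \<longleftrightarrow> x \<le> y \<and> (y < (1 + eps) * x \<or> (x = 0 \<and> y = 0))"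

record 'r salg =
  seed :: "'r pmf"
  init :: "'r \<Rightarrow> bool list"
  step :: "'r \<Rightarrow> bool list \<Rightarrow> nat \<times> int \<Rightarrow> bool list"
  est  :: "'r \<Rightarrow> bool list \<Rightarrow> real"

definition run :: "'r salg \<Rightarrow> 'r \<Rightarrow> (nat \<times> int) list \<Rightarrow> bool list" where
  "run A r s = fold (\<lambda>u st. step A r st u) s (init A r)"

definition order_invariant :: "nat \<Rightarrow> nat \<Rightarrow> 'r salg \<Rightarrow> bool" where
  "order_invariant n m A \<longleftrightarrow>
     (\<forall>r s1 s2. valid_stream n m s1 \<longrightarrow> valid_stream n m s2 \<longrightarrow> freq s1 = freq s2
        \<longrightarrow> run A r s1 = run A r s2)"

definition uses_space :: "nat \<Rightarrow> nat \<Rightarrow> 'r salg \<Rightarrow> real \<Rightarrow> bool" where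
  "uses_space n m A S \<longleftrightarrow>
     (\<forall>r\<in>set_pmf (seed A). \<forall>s. valid_stream n m s \<longrightarrow> real (length (run A r s)) \<le> S)"

definition oblivious_correct ::
  "nat \<Rightarrow> nat \<Rightarrow> ((nat \<Rightarrow> int) \<Rightarrow> real) \<Rightarrow> real \<Rightarrow> real \<Rightarrow> 'r salg \<Rightarrow> bool" where
  "oblivious_correct n m f eps delta A \<longleftrightarrow>
     (\<forall>s. valid_stream n m s \<longrightarrow>
        measure_pmf.prob (seed A) {r. mult_approx eps (f (freq s)) (est A r (run A r s))} \<ge> 1 - delta)"

text \<open>In each round it maps
  (persistent memory, estimate memory) to a distribution (over its fresh randomness) of
  (new persistent memory, update).  The estimate memory is None in round 1.\<close>
type_synonym adversary = "bool list \<Rightarrow> real option \<Rightarrow> (bool list \<times> (nat \<times> int)) pmf"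

definition bounded_adversary :: "nat \<Rightarrow> nat \<Rightarrow> bool list \<Rightarrow> adversary \<Rightarrow> bool" where
  "bounded_adversary n k p0 adv \<longleftrightarrow> length p0 \<le> k \<and>
     (\<forall>p y. length p \<le> k \<longrightarrow>
        (\<forall>pu\<in>set_pmf (adv p y). length (fst pu) \<le> k \<and> valid_update n (snd pu)))"

text \<open>Remaining j rounds of the game, given the algorithm seed r and the current configuration
  (persistent memory, estimate memory, algorithm memory, frequency vector).\<close>
fun play :: "'r salg \<Rightarrow> adversary \<Rightarrow> ((nat \<Rightarrow> int) \<Rightarrow> real) \<Rightarrow> real \<Rightarrow> 'r \<Rightarrow> nat \<Rightarrow>
      bool list \<times> real option \<times> bool list \<times> (nat \<Rightarrow> int) \<Rightarrow> bool pmf" where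
  "play R adv f eps r 0 cfg = return_pmf True"
| "play R adv f eps r (Suc j) (p, y, st, v) =
     bind_pmf (adv p y) (\<lambda>(p', u).
       (let st' = step R r st u;
            v' = v(fst u := v (fst u) + snd u);
            y' = est R r st'
        in if mult_approx eps (f v') y' then play R adv f eps r j (p', Some y', st', v')
           else return_pmf False))"

definition game :: "'r salg \<Rightarrow> adversary \<Rightarrow> bool list \<Rightarrow> ((nat \<Rightarrow> int) \<Rightarrow> real) \<Rightarrow> real \<Rightarrow> nat \<Rightarrow> bool pmf" where
  "game R adv p0 f eps m =
     bind_pmf (seed R) (\<lambda>r. play R adv f eps r m (p0, None, init R r, (\<lambda>_. 0)))"

end

theory Submission
  imports Defs
begin

lemma measure_bind_pmf_real:
  "measure_pmf.prob (bind_pmf M N) X = (\<integral>x. measure_pmf.prob (N x) X \<partial>M)"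
proof -
  have "emeasure (bind_pmf M N) X = (\<integral>\<^sup>+x. emeasure (N x) X \<partial>M)" by simp
  also have "\<dots> = (\<integral>\<^sup>+x. ennreal (measure_pmf.prob (N x) X) \<partial>M)"
    by (simp add: measure_pmf.emeasure_eq_measure)
  also have "\<dots> = ennreal (\<integral>x. measure_pmf.prob (N x) X \<partial>M)"
    by (rule nn_integral_eq_integral) (auto intro!: measure_pmf.integrable_const_bound[where B=1])
  finally show ?thesis
    by (simp add: measure_pmf.emeasure_eq_measure integral_nonneg_AE)
qed

lemma prob_replicate_Suc:
  "measure_pmf.prob (replicate_pmf (Suc T) P) X =
     (\<integral>x. measure_pmf.prob (replicate_pmf T P) {xs. x # xs \<in> X} \<partial>P)"
proof -
  have "replicate_pmf (Suc T) P = bind_pmf P (\<lambda>x. map_pmf (Cons x) (replicate_pmf T P))"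
    by (simp add: map_pmf_def)
  then show ?thesis by (simp add: measure_bind_pmf_real vimage_def)
qed

lemma chernoff_rep:
  assumes pb: "measure_pmf.prob P {r. b r} \<le> 1/10"
  shows "measure_pmf.prob (replicate_pmf T P) {xs. t \<le> real (length (filter b xs))}
           \<le> (9/5)^T / 9 powr t"
proof (induction T arbitrary: t)
  case 0
  show ?case
  proof (cases "t \<le> 0")
    case True
    then have "9 powr t \<le> 9 powr 0" by (intro powr_mono) auto
    then have "9 powr t \<le> 1" by simp
    moreover have "measure_pmf.prob (replicate_pmf 0 P) {xs. t \<le> real (length (filter b xs))} \<le> 1"
      by simp
    moreover have "1 \<le> 1 / 9 powr t" using \<open>9 powr t \<le> 1\<close> by (simp add: field_simps)
    ultimately show ?thesis by (simp only: power_0)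
  next
    case False
    then show ?thesis by (simp add: indicator_def)
  qed
next
  case (Suc T)
  define ind where "ind x = (if b x then 1 else 0::real)" for x
  have eq: "measure_pmf.prob (replicate_pmf (Suc T) P) {xs. t \<le> real (length (filter b xs))}
     = (\<integral>x. measure_pmf.prob (replicate_pmf T P) {xs. t - ind x \<le> real (length (filter b xs))} \<partial>P)"
    unfolding prob_replicate_Suc
    by (intro Bochner_Integration.integral_cong refl arg_cong[where f="measure_pmf.prob _"])
       (auto simp: ind_def)
  have "\<dots> \<le> (\<integral>x. (9/5)^T / 9 powr t * (1 + 8 * indicator {r. b r} x) \<partial>P)"
  proof (rule integral_mono)
    show "integrable (measure_pmf P) (\<lambda>x. measure_pmf.prob (replicate_pmf T P) {xs. t - ind x \<le> real (length (filter b xs))})"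
      by (intro measure_pmf.integrable_const_bound[where B=1]) auto
    show "integrable (measure_pmf P) (\<lambda>x. (9/5)^T / 9 powr t * (1 + 8 * indicator {r. b r} x))"
      by (intro measure_pmf.integrable_const_bound[where B="(9/5)^T / 9 powr t * 9"]) (auto simp: indicator_def divide_right_mono)
    fix x
    have "measure_pmf.prob (replicate_pmf T P) {xs. t - ind x \<le> real (length (filter b xs))}
        \<le> (9/5)^T / 9 powr (t - ind x)" by (rule Suc.IH)
    also have "\<dots> = (9/5)^T / 9 powr t * (1 + 8 * indicator {r. b r} x)"
      by (auto simp: ind_def indicator_def powr_diff)
    finally show "measure_pmf.prob (replicate_pmf T P) {xs. t - ind x \<le> real (length (filter b xs))}
        \<le> (9/5)^T / 9 powr t * (1 + 8 * indicator {r. b r} x)" .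
  qed
  also have "\<dots> = (9/5)^T / 9 powr t * (1 + 8 * measure_pmf.prob P {r. b r})"
  proof -
    have "(\<integral>x. 1 + 8 * indicator {r. b r} x \<partial>P) = (\<integral>x. 1 \<partial>P) + (\<integral>x. (8::real) * indicator {r. b r} x \<partial>P)"
      by (rule Bochner_Integration.integral_add)
         (auto intro!: measure_pmf.integrable_const_bound[where B=8] simp: indicator_def)
    then show ?thesis by simp
  qed
  also have "\<dots> \<le> (9/5)^T / 9 powr t * (9/5)"
    by (intro mult_left_mono) (use pb in auto)
  finally show ?case using eq by (simp add: field_simps)
qed

lemma chernoff_half:
  assumes pb: "measure_pmf.prob P {r. b r} \<le> 1/10"
  shows "measure_pmf.prob (replicate_pmf T P) {xs. real T \<le> 2 * real (length (filter b xs))}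
           \<le> (3/5)^T"
proof -
  have "measure_pmf.prob (replicate_pmf T P) {xs. real T \<le> 2 * real (length (filter b xs))}
     = measure_pmf.prob (replicate_pmf T P) {xs. real T / 2 \<le> real (length (filter b xs))}"
    by (intro arg_cong[where f="measure_pmf.prob _"]) auto
  also have "\<dots> \<le> (9/5)^T / 9 powr (real T / 2)" by (rule chernoff_rep[OF pb])
  also have "9 powr (real T / 2) = 3 ^ T"
  proof -
    have "(9::real) powr (real T / 2) = (3 powr 2) powr (real T / 2)" by simp
    also have "\<dots> = 3 powr (real T)" by (simp add: powr_powr)
    also have "\<dots> = 3 ^ T" by (simp add: powr_realpow)
    finally show ?thesis .
  qed
  also have "(9/5::real)^T / 3^T = (3/5)^T" by (simp add: power_divide[symmetric])
  finally show ?thesis .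
qed

definition med :: "real list \<Rightarrow> real" where
  "med zs = Min {z \<in> set zs. length zs < 2 * length (filter (\<lambda>x. x \<le> z) zs)}"

lemma length_filter_mono_imp:
  "(\<And>x. x \<in> set xs \<Longrightarrow> P x \<Longrightarrow> Q x) \<Longrightarrow> length (filter P xs) \<le> length (filter Q xs)"
  by (induction xs) auto

lemma med_correct:
  fixes zs :: "real list"
  assumes maj: "length zs < 2 * length (filter P zs)"
    and conv: "\<And>a b z. P a \<Longrightarrow> P b \<Longrightarrow> a \<le> z \<Longrightarrow> z \<le> b \<Longrightarrow> P z"
  shows "P (med zs)"
proof -
  define S where "S = {z \<in> set zs. length zs < 2 * length (filter (\<lambda>x. x \<le> z) zs)}"
  define Q where "Q = {x \<in> set zs. P x}"
  have fS: "finite S" "finite Q" unfolding S_def Q_def by auto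
  have "filter P zs \<noteq> []" using maj by auto
  then have Qne: "Q \<noteq> {}" unfolding Q_def by (auto simp: filter_empty_conv)
  define zM where "zM = Max Q"
  define zm where "zm = Min Q"
  have zMQ: "zM \<in> Q" using Qne fS unfolding zM_def by auto
  have zmQ: "zm \<in> Q" using Qne fS unfolding zm_def by auto
  have "length (filter P zs) \<le> length (filter (\<lambda>x. x \<le> zM) zs)"
    by (rule length_filter_mono_imp) (use fS in \<open>auto simp: zM_def Q_def\<close>)
  then have zMS: "zM \<in> S" using zMQ maj unfolding S_def Q_def by auto
  have medS: "med zs \<in> S" and med_le: "med zs \<le> zM"
  proof -
    have ne: "S \<noteq> {}" using zMS by auto
    show "med zs \<in> S" unfolding med_def S_def[symmetric] using Min_in[OF fS(1) ne] .
    show "med zs \<le> zM" unfolding med_def S_def[symmetric] using Min_le[OF fS(1) zMS] .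
  qed
  have "zm \<le> med zs"
  proof (rule ccontr)
    assume "\<not> zm \<le> med zs"
    then have lt: "med zs < zm" by simp
    have "length (filter (\<lambda>x. x \<le> med zs) zs) \<le> length (filter (\<lambda>x. \<not> P x) zs)"
    proof (rule length_filter_mono_imp)
      fix x assume "x \<in> set zs" "x \<le> med zs"
      show "\<not> P x"
      proof
        assume "P x"
        then have "x \<in> Q" using \<open>x \<in> set zs\<close> unfolding Q_def by auto
        then have "zm \<le> x" using fS unfolding zm_def by auto
        then show False using lt \<open>x \<le> med zs\<close> by simp
      qed
    qed
    moreover have "length (filter P zs) + length (filter (\<lambda>x. \<not> P x) zs) = length zs"
      by (rule sum_length_filter_compl)
    ultimately show False using medS maj unfolding S_def by auto
  qed
  show ?thesis
    by (rule conv[of zm zM]) (use zmQ zMQ med_le \<open>zm \<le> med zs\<close> in \<open>auto simp: Q_def\<close>)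
qed

lemma mult_approx_conv:
  "mult_approx e F a \<Longrightarrow> mult_approx e F b \<Longrightarrow> a \<le> z \<Longrightarrow> z \<le> b \<Longrightarrow> mult_approx e F z"
  unfolding mult_approx_def by auto

definition rnd :: "real \<Rightarrow> nat \<Rightarrow> real \<Rightarrow> real" where
  "rnd g K z = (if z \<le> 0 then 0 else (1+g)^(min K (LEAST i. z \<le> (1+g)^i)))"

lemma rnd_range: "rnd g K z \<in> insert 0 ((\<lambda>i. (1+g)^i) ` {..K})"
  unfolding rnd_def by auto

lemma rnd_correct:
  fixes g e F z :: real
  assumes g: "0 < g" "(1+g)^2 \<le> 1 + e"
    and F: "F = 0 \<or> (1 \<le> F \<and> F \<le> a)"
    and K: "(1+g) * a \<le> (1+g)^K"
    and ma: "mult_approx g F z"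
  shows "mult_approx e F (rnd g K z)"
proof (cases "F = 0")
  case True
  then have "z = 0" using ma unfolding mult_approx_def by auto
  then show ?thesis using True unfolding mult_approx_def rnd_def by auto
next
  case False
  then have F1: "1 \<le> F" "F \<le> a" using F by auto
  have zF: "F \<le> z" "z < (1+g) * F" using ma False unfolding mult_approx_def by auto
  have zpos: "0 < z" using zF F1 by auto
  have ex: "\<exists>i. z \<le> (1+g)^i"
  proof -
    have "z < (1+g)^K" using zF F1 K g
      by (smt (verit, best) mult_left_mono)
    then show ?thesis by (intro exI[of _ K]) simp
  qed
  define i where "i = (LEAST i. z \<le> (1+g)^i)"
  have zi: "z \<le> (1+g)^i" unfolding i_def by (rule LeastI_ex[OF ex])
  have iK: "i \<le> K"
  proof -
    have "z \<le> (1+g)^K" using zF F1 K g by (smt (verit, best) mult_left_mono)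
    then show ?thesis unfolding i_def by (rule Least_le)
  qed
  have r: "rnd g K z = (1+g)^i" using zpos iK unfolding rnd_def i_def[symmetric] by simp
  have up: "(1+g)^i < (1+g) * z"
  proof (cases i)
    case 0
    then show ?thesis using zF F1 g by simp (smt (verit) mult_le_cancel_right1)
  next
    case (Suc i')
    have "\<not> z \<le> (1+g)^i'"
    proof
      assume "z \<le> (1+g)^i'"
      then have "i \<le> i'" unfolding i_def by (rule Least_le)
      then show False using Suc by simp
    qed
    then show ?thesis using Suc g by simp
  qed
  have "(1+g) * z < (1+g) * ((1+g) * F)" using zF g by simp
  also have "\<dots> = (1+g)^2 * F" by (simp add: power2_eq_square)
  also have "\<dots> \<le> (1+e) * F" using g F1 by (intro mult_right_mono) auto
  finally show ?thesis using r up zi zF unfolding mult_approx_def by simp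
qed

definition enc :: "nat \<Rightarrow> bool list \<Rightarrow> bool list" where
  "enc Ms s = (if Ms = 0 then [] else replicate (Ms - length s) False @ True # s)"
definition dec :: "nat \<Rightarrow> bool list \<Rightarrow> bool list" where
  "dec Ms c = (if Ms = 0 then [] else tl (dropWhile Not c))"
definition wid :: "nat \<Rightarrow> nat" where
  "wid Ms = (if Ms = 0 then 0 else Suc Ms)"
definition chunk :: "nat \<Rightarrow> bool list \<Rightarrow> nat \<Rightarrow> bool list" where
  "chunk w st i = take w (drop (i * w) st)"

lemma dropWhile_replicate_False: "dropWhile Not (replicate k False @ True # s) = True # s"
  by (induction k) auto

lemma enc_len: "length s \<le> Ms \<Longrightarrow> length (enc Ms s) = wid Ms"
  unfolding enc_def wid_def by auto

lemma dec_enc: "length s \<le> Ms \<Longrightarrow> dec Ms (enc Ms s) = s"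
  unfolding enc_def dec_def by (auto simp: dropWhile_replicate_False)

lemma chunk_concat:
  "(\<forall>x\<in>set xs. length x = w) \<Longrightarrow> i < length xs \<Longrightarrow> chunk w (concat xs) i = xs ! i"
proof (induction xs arbitrary: i)
  case Nil then show ?case by simp
next
  case (Cons x xs)
  show ?case
  proof (cases i)
    case 0 then show ?thesis using Cons.prems by (simp add: chunk_def)
  next
    case (Suc i')
    have "chunk w (concat (x # xs)) i = chunk w (concat xs) i'"
      using Cons.prems Suc by (simp add: chunk_def add.commute)
    then show ?thesis using Cons Suc by simp
  qed
qed

definition robust :: "'r salg \<Rightarrow> nat \<Rightarrow> nat \<Rightarrow> real \<Rightarrow> nat \<Rightarrow> ('r list \<times> nat) salg" where
 "robust B Ms T g K = \<lparr> seed = map_pmf (\<lambda>\<rho>. (\<rho>, 0)) (replicate_pmf T (seed B)),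
   init = (\<lambda>(\<rho>, _). concat (map (\<lambda>r. enc Ms (init B r)) \<rho>)),
   step = (\<lambda>(\<rho>, _) st u. concat (map (\<lambda>(i, r). enc Ms (step B r (dec Ms (chunk (wid Ms) st i)) u))
                                  (zip [0..<length \<rho>] \<rho>))),
   est = (\<lambda>(\<rho>, _) st. rnd g K (med (map (\<lambda>(i, r). est B r (dec Ms (chunk (wid Ms) st i)))
                                  (zip [0..<length \<rho>] \<rho>)))) \<rparr>"

lemma valid_stream_butlast: "valid_stream n m (s @ [u]) \<Longrightarrow> valid_stream n m s"
  unfolding valid_stream_def by auto

lemma run_snoc: "run A r (s @ [u]) = step A r (run A r s) u"
  unfolding run_def by simp

lemma map_zip_upt:
  "map (\<lambda>(i, r). h i r) (zip [0..<length xs] xs) = map (\<lambda>i. h i (xs ! i)) [0..<length xs]"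
  by (rule nth_equalityI) auto

lemma run_robust:
  assumes sp: "\<forall>r\<in>set \<rho>. \<forall>s'. valid_stream n m s' \<longrightarrow> length (run B r s') \<le> Ms"
    and v: "valid_stream n m s"
  shows "run (robust B Ms T g K) (\<rho>, x) s = concat (map (\<lambda>r. enc Ms (run B r s)) \<rho>)"
  using v
proof (induction s rule: rev_induct)
  case Nil
  show ?case by (simp add: run_def robust_def)
next
  case (snoc u s)
  have vs: "valid_stream n m s" using snoc.prems by (rule valid_stream_butlast)
  have IH: "run (robust B Ms T g K) (\<rho>, x) s = concat (map (\<lambda>r. enc Ms (run B r s)) \<rho>)"
    using snoc.IH vs .
  have lens: "\<forall>y\<in>set (map (\<lambda>r. enc Ms (run B r s)) \<rho>). length y = wid Ms"
    using sp vs by (auto intro!: enc_len)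
  have ch: "dec Ms (chunk (wid Ms) (concat (map (\<lambda>r. enc Ms (run B r s)) \<rho>)) i) = run B (\<rho> ! i) s"
    if "i < length \<rho>" for i
    using chunk_concat[OF lens, of i] that sp vs by (simp add: dec_enc)
  show ?case
    unfolding run_snoc IH
    apply (simp add: robust_def map_zip_upt)
    apply (rule arg_cong[where f=concat])
    apply (rule nth_equalityI)
     apply (auto simp: ch)
    done
qed

lemma est_robust:
  assumes sp: "\<forall>r\<in>set \<rho>. \<forall>s'. valid_stream n m s' \<longrightarrow> length (run B r s') \<le> Ms"
    and v: "valid_stream n m s"
  shows "est (robust B Ms T g K) (\<rho>, x) (run (robust B Ms T g K) (\<rho>, x) s)
         = rnd g K (med (map (\<lambda>r. est B r (run B r s)) \<rho>))"
proof -
  have lens: "\<forall>y\<in>set (map (\<lambda>r. enc Ms (run B r s)) \<rho>). length y = wid Ms"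
    using sp v by (auto intro!: enc_len)
  have ch: "dec Ms (chunk (wid Ms) (concat (map (\<lambda>r. enc Ms (run B r s)) \<rho>)) i) = run B (\<rho> ! i) s"
    if "i < length \<rho>" for i
    using chunk_concat[OF lens, of i] that sp v by (simp add: dec_enc)
  show ?thesis
    unfolding run_robust[OF sp v]
    apply (simp add: robust_def map_zip_upt)
    apply (intro arg_cong[where f="rnd g K"] arg_cong[where f=med])
    apply (rule nth_equalityI)
     apply (auto simp: ch)
    done
qed

lemma len_robust:
  assumes sp: "\<forall>r\<in>set \<rho>. \<forall>s'. valid_stream n m s' \<longrightarrow> length (run B r s') \<le> Ms"
    and v: "valid_stream n m s"
  shows "length (run (robust B Ms T g K) (\<rho>, x) s) = length \<rho> * wid Ms"
proof -
  have "\<forall>y\<in>set (map (\<lambda>r. enc Ms (run B r s)) \<rho>). length y = wid Ms"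
    using sp v by (auto intro!: enc_len)
  then show ?thesis unfolding run_robust[OF sp v] length_concat
    by (induction \<rho>) auto
qed

definition addu :: "(nat \<Rightarrow> int) \<Rightarrow> nat \<times> int \<Rightarrow> (nat \<Rightarrow> int)" where
  "addu w u = w(fst u := w (fst u) + snd u)"

lemma addu_comm: "addu (addu w u) u' = addu (addu w u') u"
  unfolding addu_def by (auto simp: fun_eq_iff)

definition stepD :: "adversary \<Rightarrow> bool list \<times> real option \<Rightarrow> (nat \<Rightarrow> int) pmf \<Rightarrow> (nat \<Rightarrow> int) pmf" where
  "stepD adv c P = bind_pmf P (\<lambda>w. map_pmf (\<lambda>pu. addu w (snd pu)) (adv (fst c) (snd c)))"

lemma stepD_comm: "comp_fun_commute (stepD adv)"
proof
  fix c d
  show "stepD adv d \<circ> stepD adv c = stepD adv c \<circ> stepD adv d"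
  proof
    fix P
    have "(stepD adv d \<circ> stepD adv c) P =
       bind_pmf P (\<lambda>w. bind_pmf (adv (fst c) (snd c)) (\<lambda>pu. bind_pmf (adv (fst d) (snd d))
          (\<lambda>qu. return_pmf (addu (addu w (snd pu)) (snd qu)))))"
      by (simp add: stepD_def map_pmf_def bind_assoc_pmf bind_return_pmf)
    also have "\<dots> = bind_pmf P (\<lambda>w. bind_pmf (adv (fst d) (snd d)) (\<lambda>qu. bind_pmf (adv (fst c) (snd c))
          (\<lambda>pu. return_pmf (addu (addu w (snd qu)) (snd pu)))))"
      by (subst bind_commute_pmf) (simp add: addu_comm)
    also have "\<dots> = (stepD adv c \<circ> stepD adv d) P"
      by (simp add: stepD_def map_pmf_def bind_assoc_pmf bind_return_pmf)
    finally show "(stepD adv d \<circ> stepD adv c) P = (stepD adv c \<circ> stepD adv d) P" .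
  qed
qed

definition Dm :: "adversary \<Rightarrow> (bool list \<times> real option) multiset \<Rightarrow> (nat \<Rightarrow> int) \<Rightarrow> (nat \<Rightarrow> int) pmf" where
  "Dm adv M v = fold_mset (stepD adv) (return_pmf v) M"

lemma Dm_empty[simp]: "Dm adv {#} v = return_pmf v"
  unfolding Dm_def by simp

lemma Dm_add: "Dm adv (add_mset c M) v = stepD adv c (Dm adv M v)"
  unfolding Dm_def by (simp add: comp_fun_commute.fold_mset_add_mset[OF stepD_comm])

lemma Dm_first:
  "bind_pmf (adv (fst c) (snd c)) (\<lambda>pu. Dm adv M (addu v (snd pu))) = Dm adv (add_mset c M) v"
proof (induction M)
  case empty
  show ?case by (simp add: Dm_add stepD_def map_pmf_def bind_return_pmf)
next
  case (add d M)
  have "bind_pmf (adv (fst c) (snd c)) (\<lambda>pu. Dm adv (add_mset d M) (addu v (snd pu)))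
      = stepD adv d (bind_pmf (adv (fst c) (snd c)) (\<lambda>pu. Dm adv M (addu v (snd pu))))"
    by (simp add: Dm_add stepD_def bind_assoc_pmf)
  also have "\<dots> = Dm adv (add_mset d (add_mset c M)) v" by (simp add: add Dm_add)
  finally show ?case by (simp add: add_mset_commute)
qed

lemma msets_inj:
  "inj_on (\<lambda>M. restrict (count M) A) {M. set_mset M \<subseteq> A}"
proof (rule inj_onI)
  fix M N assume M: "M \<in> {M. set_mset M \<subseteq> A}" and N: "N \<in> {M. set_mset M \<subseteq> A}"
    and eq: "restrict (count M) A = restrict (count N) A"
  show "M = N"
  proof (rule multiset_eqI)
    fix x show "count M x = count N x"
    proof (cases "x \<in> A")
      case True then show ?thesis using fun_cong[OF eq, of x] by simp
    next
      case False
      then have "x \<notin># M" "x \<notin># N" using M N by auto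
      then show ?thesis by (simp add: not_in_iff)
    qed
  qed
qed

lemma msets_into:
  "(\<lambda>M. restrict (count M) A) ` {M. set_mset M \<subseteq> A \<and> size M \<le> j} \<subseteq> PiE A (\<lambda>_. {0..j})"
proof
  fix g assume "g \<in> (\<lambda>M. restrict (count M) A) ` {M. set_mset M \<subseteq> A \<and> size M \<le> j}"
  then obtain M where M: "size M \<le> j" and g: "g = restrict (count M) A" by auto
  have "count M x \<le> j" for x using M count_le_size[of M x] by simp
  then show "g \<in> PiE A (\<lambda>_. {0..j})" using g by auto
qed

lemma finite_msets:
  assumes "finite A" shows "finite {M. set_mset M \<subseteq> A \<and> size M \<le> j}"
  by (rule inj_on_finite[OF inj_on_subset[OF msets_inj] msets_into]) (use assms in \<open>auto intro: finite_PiE\<close>)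

lemma card_msets:
  assumes "finite A" shows "card {M. set_mset M \<subseteq> A \<and> size M \<le> j} \<le> (Suc j) ^ card A"
proof -
  have "card {M. set_mset M \<subseteq> A \<and> size M \<le> j} \<le> card (PiE A (\<lambda>_. {0..j}))"
    by (rule card_inj_on_le[OF inj_on_subset[OF msets_inj] msets_into]) (use assms in \<open>auto intro: finite_PiE\<close>)
  also have "\<dots> = (Suc j) ^ card A" using assms by (simp add: card_PiE)
  finally show ?thesis .
qed

lemma card_msets_c:
  assumes "finite A" "c \<in> A"
  shows "card {M. c \<in># M \<and> size M \<le> Suc j \<and> set_mset M \<subseteq> A} \<le> (Suc j) ^ card A"
proof -
  have "card {M. c \<in># M \<and> size M \<le> Suc j \<and> set_mset M \<subseteq> A} \<le> card {M. set_mset M \<subseteq> A \<and> size M \<le> j}"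
  proof (rule card_inj_on_le[where f="\<lambda>M. M - {#c#}"])
    show "inj_on (\<lambda>M. M - {#c#}) {M. c \<in># M \<and> size M \<le> Suc j \<and> set_mset M \<subseteq> A}"
      by (rule inj_onI) (metis CollectD insert_DiffM)
    show "(\<lambda>M. M - {#c#}) ` {M. c \<in># M \<and> size M \<le> Suc j \<and> set_mset M \<subseteq> A} \<subseteq> {M. set_mset M \<subseteq> A \<and> size M \<le> j}"
    proof
      fix N assume "N \<in> (\<lambda>M. M - {#c#}) ` {M. c \<in># M \<and> size M \<le> Suc j \<and> set_mset M \<subseteq> A}"
      then obtain M where M: "c \<in># M" "size M \<le> Suc j" "set_mset M \<subseteq> A" and N: "N = M - {#c#}" by auto
      have "size N \<le> j" using M N by (simp add: size_Diff_singleton)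
      moreover have "set_mset N \<subseteq> A" using M N by (meson in_diffD subset_iff)
      ultimately show "N \<in> {M. set_mset M \<subseteq> A \<and> size M \<le> j}" by simp
    qed
    show "finite {M. set_mset M \<subseteq> A \<and> size M \<le> j}" by (rule finite_msets[OF assms(1)])
  qed
  also have "\<dots> \<le> (Suc j) ^ card A" by (rule card_msets[OF assms(1)])
  finally show ?thesis .
qed

lemma freq_snoc: "freq (s @ [u]) = addu (freq s) u"
  unfolding freq_def addu_def by (auto simp: fun_eq_iff)

lemma freq_Nil: "freq [] = (\<lambda>_. 0)"
  unfolding freq_def by auto

lemma finite_lists_le: "finite {p :: bool list. length p \<le> k}"
  using finite_lists_length_le[of "UNIV :: bool set" k] by simp

lemma play_bound:
  fixes R :: "'q salg" and r :: 'q and f :: "(nat \<Rightarrow> int) \<Rightarrow> real" and eps :: real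
  assumes adv_ok: "\<forall>p y. length p \<le> k \<longrightarrow> (\<forall>pu\<in>set_pmf (adv p y). length (fst pu) \<le> k \<and> valid_update n (snd pu))"
    and Gr: "\<forall>s. valid_stream n m s \<longrightarrow> est R r (run R r s) \<in> G"
    and fG: "finite G"
  defines "Cfg \<equiv> {p :: bool list. length p \<le> k} \<times> insert None (Some ` G)"
    and "Bad \<equiv> {w. \<exists>s. valid_stream n m s \<and> freq s = w \<and> \<not> mult_approx eps (f w) (est R r (run R r s))}"
  shows "length p \<le> k \<Longrightarrow> y \<in> insert None (Some ` G) \<Longrightarrow> valid_stream n m s \<Longrightarrow> length s + j \<le> m \<Longrightarrow>
    pmf (play R adv f eps r j (p, y, run R r s, freq s)) False \<le>
    (\<Sum>M \<in> {M. (p, y) \<in># M \<and> size M \<le> j \<and> set_mset M \<subseteq> Cfg}. measure_pmf.prob (Dm adv M (freq s)) Bad)"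
proof (induction j arbitrary: p y s)
  case 0
  show ?case by (simp add: sum_nonneg)
next
  case (Suc j)
  have fCfg: "finite Cfg" unfolding Cfg_def using fG finite_lists_le by auto
  define c where "c = (p, y)"
  have cC: "c \<in> Cfg" using Suc.prems unfolding c_def Cfg_def by auto
  define v where "v = freq s"
  define NE where "NE = {M. M \<noteq> {#} \<and> size M \<le> j \<and> set_mset M \<subseteq> Cfg}"
  have fNE: "finite NE" unfolding NE_def
    by (rule finite_subset[OF _ finite_msets[OF fCfg, of j]]) auto
  define h where "h u = indicator Bad (addu v u) + (\<Sum>M\<in>NE. measure_pmf.prob (Dm adv M (addu v u)) Bad)" for u
  define F where "F = (\<lambda>(p', u). let st' = step R r (run R r s) u; v' = v(fst u := v (fst u) + snd u);
            y' = est R r st'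
        in if mult_approx eps (f v') y' then play R adv f eps r j (p', Some y', st', v')
           else return_pmf False)"
  have pl: "play R adv f eps r (Suc j) (p, y, run R r s, freq s) = bind_pmf (adv p y) F"
    unfolding F_def v_def by simp
  have Fb: "pmf (F pu) False \<le> h (snd pu)" if pu: "pu \<in> set_pmf (adv p y)" for pu
  proof -
    obtain p' u where pu_eq: "pu = (p', u)" by (cases pu) blast
    have p'k: "length p' \<le> k" and vu: "valid_update n u"
      using adv_ok Suc.prems(1) pu unfolding pu_eq by fastforce+
    define s' where "s' = s @ [u]"
    have vs': "valid_stream n m s'" using Suc.prems(3,4) vu unfolding s'_def valid_stream_def by auto
    have run': "step R r (run R r s) u = run R r s'" unfolding s'_def run_snoc ..
    have v': "v(fst u := v (fst u) + snd u) = freq s'" unfolding s'_def freq_snoc v_def addu_def ..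
    have av: "addu v u = freq s'" unfolding s'_def freq_snoc v_def ..
    have Fe: "F pu = (if mult_approx eps (f (freq s')) (est R r (run R r s'))
                    then play R adv f eps r j (p', Some (est R r (run R r s')), run R r s', freq s')
                    else return_pmf False)"
      unfolding pu_eq F_def using run' v' by (simp add: Let_def)
    have hnn: "0 \<le> (\<Sum>M\<in>NE. measure_pmf.prob (Dm adv M (addu v u)) Bad)" by (simp add: sum_nonneg)
    show ?thesis
    proof (cases "mult_approx eps (f (freq s')) (est R r (run R r s'))")
      case True
      have yG: "Some (est R r (run R r s')) \<in> insert None (Some ` G)" using Gr vs' by auto
      have l': "length s' + j \<le> m" using Suc.prems(4) unfolding s'_def by simp
      have "pmf (F pu) False \<le> (\<Sum>M \<in> {M. (p', Some (est R r (run R r s'))) \<in># M \<and> size M \<le> j \<and> set_mset M \<subseteq> Cfg}.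
              measure_pmf.prob (Dm adv M (freq s')) Bad)"
        using Suc.IH[OF p'k yG vs' l'] True Fe by simp
      also have "\<dots> \<le> (\<Sum>M\<in>NE. measure_pmf.prob (Dm adv M (freq s')) Bad)"
        by (rule sum_mono2[OF fNE]) (auto simp: NE_def)
      also have "\<dots> \<le> h (snd pu)" unfolding h_def pu_eq snd_conv av by (simp add: indicator_def)
      finally show ?thesis .
    next
      case False
      then have "freq s' \<in> Bad" unfolding Bad_def using vs' by auto
      then have "indicator Bad (addu v u) = (1::real)" using av by simp
      then show ?thesis using Fe False hnn unfolding h_def pu_eq by simp
    qed
  qed
  have hbound: "\<bar>h u\<bar> \<le> 1 + real (card NE)" for u
  proof -
    have "(\<Sum>M\<in>NE. measure_pmf.prob (Dm adv M (addu v u)) Bad) \<le> (\<Sum>M\<in>NE. 1)"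
      by (rule sum_mono) simp
    then show ?thesis unfolding h_def by (simp add: indicator_def sum_nonneg abs_of_nonneg)
  qed
  have "pmf (play R adv f eps r (Suc j) (p, y, run R r s, freq s)) False
      = (\<integral>pu. pmf (F pu) False \<partial>adv p y)" unfolding pl pmf_bind ..
  also have "\<dots> \<le> (\<integral>pu. h (snd pu) \<partial>adv p y)"
  proof (rule integral_mono_AE)
    show "integrable (measure_pmf (adv p y)) (\<lambda>pu. pmf (F pu) False)"
      by (rule measure_pmf.integrable_const_bound[where B=1]) (auto simp: pmf_le_1)
    show "integrable (measure_pmf (adv p y)) (\<lambda>pu. h (snd pu))"
      by (rule measure_pmf.integrable_const_bound[where B="1 + real (card NE)"]) (auto simp: hbound)
    show "AE pu in measure_pmf (adv p y). pmf (F pu) False \<le> h (snd pu)"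
      by (rule AE_pmfI) (rule Fb)
  qed
  also have "\<dots> = measure_pmf.prob (Dm adv {#c#} v) Bad + (\<Sum>M\<in>NE. measure_pmf.prob (Dm adv (add_mset c M) v) Bad)"
  proof -
    have i1: "(\<integral>pu. indicator Bad (addu v (snd pu)) \<partial>adv p y) = measure_pmf.prob (Dm adv {#c#} v) Bad"
    proof -
      have "Dm adv {#c#} v = map_pmf (\<lambda>pu. addu v (snd pu)) (adv p y)"
        by (simp add: Dm_add stepD_def c_def map_pmf_def bind_return_pmf)
      have "(\<integral>pu. indicator Bad (addu v (snd pu)) \<partial>adv p y)
          = (\<integral>pu. indicator ((\<lambda>pu. addu v (snd pu)) -` Bad) pu \<partial>adv p y)"
        by (simp add: indicator_def)
      also have "\<dots> = measure_pmf.prob (adv p y) ((\<lambda>pu. addu v (snd pu)) -` Bad)"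
        by simp
      finally show ?thesis using \<open>Dm adv {#c#} v = _\<close> by simp
    qed
    have i2: "(\<integral>pu. measure_pmf.prob (Dm adv M (addu v (snd pu))) Bad \<partial>adv p y)
        = measure_pmf.prob (Dm adv (add_mset c M) v) Bad" for M
    proof -
      have "Dm adv (add_mset c M) v = bind_pmf (adv p y) (\<lambda>pu. Dm adv M (addu v (snd pu)))"
        using Dm_first[of adv c M v] by (simp add: c_def)
      then show ?thesis by (simp add: measure_bind_pmf_real)
    qed
    have "(\<integral>pu. h (snd pu) \<partial>adv p y) = (\<integral>pu. indicator Bad (addu v (snd pu)) \<partial>adv p y)
        + (\<integral>pu. (\<Sum>M\<in>NE. measure_pmf.prob (Dm adv M (addu v (snd pu))) Bad) \<partial>adv p y)"
      unfolding h_def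
    proof (rule Bochner_Integration.integral_add)
      show "integrable (measure_pmf (adv p y)) (\<lambda>pu. indicator Bad (addu v (snd pu)) :: real)"
        by (rule measure_pmf.integrable_const_bound[where B=1]) (auto simp: indicator_def)
      have "(\<Sum>M\<in>NE. measure_pmf.prob (Dm adv M (addu v (snd x))) Bad) \<le> (\<Sum>M\<in>NE. 1)" for x
        by (rule sum_mono) simp
      then show "integrable (measure_pmf (adv p y)) (\<lambda>pu. (\<Sum>M\<in>NE. measure_pmf.prob (Dm adv M (addu v (snd pu))) Bad))"
        by (intro measure_pmf.integrable_const_bound[where B="real (card NE)"]) (auto simp: abs_of_nonneg sum_nonneg)
    qed
    also have "(\<integral>pu. (\<Sum>M\<in>NE. measure_pmf.prob (Dm adv M (addu v (snd pu))) Bad) \<partial>adv p y)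
       = (\<Sum>M\<in>NE. (\<integral>pu. measure_pmf.prob (Dm adv M (addu v (snd pu))) Bad \<partial>adv p y))"
      by (rule Bochner_Integration.integral_sum) (auto intro!: measure_pmf.integrable_const_bound[where B=1])
    finally show ?thesis using i1 i2 by simp
  qed
  also have "\<dots> = (\<Sum>M \<in> insert {#c#} (add_mset c ` NE). measure_pmf.prob (Dm adv M v) Bad)"
  proof -
    have nin: "{#c#} \<notin> add_mset c ` NE" unfolding NE_def by auto
    have inj: "inj_on (add_mset c) NE" by (auto intro: inj_onI)
    show ?thesis using fNE nin by (simp add: sum.reindex[OF inj])
  qed
  also have "\<dots> \<le> (\<Sum>M \<in> {M. (p, y) \<in># M \<and> size M \<le> Suc j \<and> set_mset M \<subseteq> Cfg}. measure_pmf.prob (Dm adv M v) Bad)"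
  proof (rule sum_mono2)
    show "finite {M. (p, y) \<in># M \<and> size M \<le> Suc j \<and> set_mset M \<subseteq> Cfg}"
      by (rule finite_subset[OF _ finite_msets[OF fCfg, of "Suc j"]]) auto
    show "insert {#c#} (add_mset c ` NE) \<subseteq> {M. (p, y) \<in># M \<and> size M \<le> Suc j \<and> set_mset M \<subseteq> Cfg}"
      using cC unfolding NE_def c_def by auto
  qed simp
  finally show ?case unfolding v_def .
qed

lemma prob_pair_pmf:
  fixes A :: "'a pmf" and B :: "'b pmf"
  shows
  "measure_pmf.prob (pair_pmf A B) X = (\<integral>x. measure_pmf.prob B {y. (x, y) \<in> X} \<partial>A)"
proof -
  have "pair_pmf A B = bind_pmf A (\<lambda>x. map_pmf (Pair x) B)"
    unfolding pair_pmf_def by (simp add: map_pmf_def)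
  then show ?thesis by (simp add: measure_bind_pmf_real vimage_def)
qed

lemma pmf_fubini_prob:
  fixes A :: "'a pmf" and B :: "'b pmf"
  shows
  "(\<integral>x. measure_pmf.prob B {y. (x, y) \<in> X} \<partial>A) = (\<integral>y. measure_pmf.prob A {x. (x, y) \<in> X} \<partial>B)"
proof -
  have "(\<integral>x. measure_pmf.prob B {y. (x, y) \<in> X} \<partial>A) = measure_pmf.prob (pair_pmf A B) X"
    by (rule prob_pair_pmf[symmetric])
  also have "\<dots> = measure_pmf.prob (pair_pmf B A) ((\<lambda>(x, y). (y, x)) -` X)"
    by (subst pair_commute_pmf) simp
  also have "\<dots> = (\<integral>y. measure_pmf.prob A {x. (x, y) \<in> X} \<partial>B)"
    by (simp add: prob_pair_pmf)
  finally show ?thesis .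
qed

lemma game_bound:
  fixes R :: "'q salg" and f :: "(nat \<Rightarrow> int) \<Rightarrow> real" and eps :: real
  assumes adv_ok: "\<forall>p y. length p \<le> k \<longrightarrow> (\<forall>pu\<in>set_pmf (adv p y). length (fst pu) \<le> k \<and> valid_update n (snd pu))"
    and p0k: "length p0 \<le> k"
    and Gr: "\<forall>r\<in>set_pmf (seed R). \<forall>s. valid_stream n m s \<longrightarrow> est R r (run R r s) \<in> G"
    and fG: "finite G"
    and beta: "\<forall>w. measure_pmf.prob (seed R) {r. \<exists>s. valid_stream n m s \<and> freq s = w \<and>
                    \<not> mult_approx eps (f w) (est R r (run R r s))} \<le> \<beta>"
    and m1: "1 \<le> m"
  shows "pmf (game R adv p0 f eps m) False
           \<le> real m ^ card ({p :: bool list. length p \<le> k} \<times> insert None (Some ` G)) * \<beta>"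
proof -
  define Cfg where "Cfg = {p :: bool list. length p \<le> k} \<times> insert None (Some ` G)"
  define Bad where "Bad r = {w. \<exists>s. valid_stream n m s \<and> freq s = w \<and> \<not> mult_approx eps (f w) (est R r (run R r s))}" for r
  define MS where "MS = {M. (p0, None) \<in># M \<and> size M \<le> m \<and> set_mset M \<subseteq> Cfg}"
  have fCfg: "finite Cfg" unfolding Cfg_def using fG finite_lists_le by auto
  have c0: "(p0, None) \<in> Cfg" unfolding Cfg_def using p0k by auto
  have fMS: "finite MS" unfolding MS_def
    by (rule finite_subset[OF _ finite_msets[OF fCfg, of m]]) auto
  have v0: "valid_stream n m []" unfolding valid_stream_def by simp
  have b0: "0 \<le> \<beta>" using beta[rule_format, of "\<lambda>_. 0"] by (meson measure_nonneg order_trans)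
  have pb: "pmf (play R adv f eps r m (p0, None, init R r, (\<lambda>_. 0))) False
      \<le> (\<Sum>M\<in>MS. measure_pmf.prob (Dm adv M (freq [])) (Bad r))" if r: "r \<in> set_pmf (seed R)" for r
  proof -
    have "init R r = run R r []" by (simp add: run_def)
    then show ?thesis
      using play_bound[OF adv_ok bspec[OF Gr r] fG, of p0 None "[]" m f eps] p0k v0
      unfolding MS_def Cfg_def Bad_def freq_Nil by (simp add: freq_Nil)
  qed
  have "pmf (game R adv p0 f eps m) False
      = (\<integral>r. pmf (play R adv f eps r m (p0, None, init R r, (\<lambda>_. 0))) False \<partial>seed R)"
    unfolding game_def pmf_bind ..
  also have "\<dots> \<le> (\<integral>r. (\<Sum>M\<in>MS. measure_pmf.prob (Dm adv M (freq [])) (Bad r)) \<partial>seed R)"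
  proof (rule integral_mono_AE)
    show "integrable (measure_pmf (seed R)) (\<lambda>r. pmf (play R adv f eps r m (p0, None, init R r, (\<lambda>_. 0))) False)"
      by (rule measure_pmf.integrable_const_bound[where B=1]) (auto simp: pmf_le_1)
    have "(\<Sum>M\<in>MS. measure_pmf.prob (Dm adv M (freq [])) (Bad x)) \<le> (\<Sum>M\<in>MS. 1)" for x
      by (rule sum_mono) simp
    then show "integrable (measure_pmf (seed R)) (\<lambda>r. (\<Sum>M\<in>MS. measure_pmf.prob (Dm adv M (freq [])) (Bad r)))"
      by (intro measure_pmf.integrable_const_bound[where B="real (card MS)"]) (auto simp: abs_of_nonneg sum_nonneg)
    show "AE r in measure_pmf (seed R). pmf (play R adv f eps r m (p0, None, init R r, (\<lambda>_. 0))) False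
        \<le> (\<Sum>M\<in>MS. measure_pmf.prob (Dm adv M (freq [])) (Bad r))"
      by (rule AE_pmfI) (rule pb)
  qed
  also have "\<dots> = (\<Sum>M\<in>MS. (\<integral>r. measure_pmf.prob (Dm adv M (freq [])) (Bad r) \<partial>seed R))"
    by (rule Bochner_Integration.integral_sum) (auto intro!: measure_pmf.integrable_const_bound[where B=1])
  also have "\<dots> \<le> (\<Sum>M\<in>MS. \<beta>)"
  proof (rule sum_mono)
    fix M
    have "(\<integral>r. measure_pmf.prob (Dm adv M (freq [])) (Bad r) \<partial>seed R)
        = (\<integral>r. measure_pmf.prob (Dm adv M (freq [])) {w. (r, w) \<in> {(r, w). w \<in> Bad r}} \<partial>seed R)"
      by simp
    also have "\<dots> = (\<integral>w. measure_pmf.prob (seed R) {r. (r, w) \<in> {(r, w). w \<in> Bad r}} \<partial>Dm adv M (freq []))"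
      by (rule pmf_fubini_prob)
    also have "\<dots> \<le> (\<integral>w. \<beta> \<partial>Dm adv M (freq []))"
    proof (rule integral_mono)
      show "integrable (measure_pmf (Dm adv M (freq []))) (\<lambda>w. measure_pmf.prob (seed R) {r. (r, w) \<in> {(r, w). w \<in> Bad r}})"
        by (rule measure_pmf.integrable_const_bound[where B=1]) auto
      show "integrable (measure_pmf (Dm adv M (freq []))) (\<lambda>w. \<beta>)" by simp
      fix w show "measure_pmf.prob (seed R) {r. (r, w) \<in> {(r, w). w \<in> Bad r}} \<le> \<beta>"
        using beta[rule_format, of w] unfolding Bad_def by simp
    qed
    also have "\<dots> = \<beta>" by simp
    finally show "(\<integral>r. measure_pmf.prob (Dm adv M (freq [])) (Bad r) \<partial>seed R) \<le> \<beta>" .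
  qed
  also have "\<dots> = real (card MS) * \<beta>" by simp
  also have "\<dots> \<le> real m ^ card Cfg * \<beta>"
  proof (rule mult_right_mono[OF _ b0])
    obtain j where j: "m = Suc j" using m1 by (cases m) auto
    have "card MS \<le> m ^ card Cfg"
      unfolding MS_def j using card_msets_c[OF fCfg c0, of j] by (simp add: conj_commute)
    then show "real (card MS) \<le> real m ^ card Cfg" by (metis of_nat_le_iff of_nat_power)
  qed
  finally show ?thesis unfolding Cfg_def .
qed

lemma sum_pow2_lt: "(\<Sum>i\<le>k. (2::nat)^i) < 2 ^ Suc k"
  by (induction k) auto

lemma card_bool_lists_le: "card {p :: bool list. length p \<le> k} \<le> 2 ^ Suc k"
proof -
  have "{p :: bool list. length p \<le> k} = {xs. set xs \<subseteq> UNIV \<and> length xs \<le> k}" by simp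
  then have "card {p :: bool list. length p \<le> k} = (\<Sum>i\<le>k. 2^i)"
    using card_lists_length_le[of "UNIV :: bool set" k] by (simp add: card_UNIV_bool)
  then show ?thesis using sum_pow2_lt[of k] by simp
qed

lemma freq_outside: "valid_stream n m s \<Longrightarrow> n \<le> i \<Longrightarrow> freq s i = 0"
proof -
  assume v: "valid_stream n m s" and i: "n \<le> i"
  have "filter (\<lambda>u. fst u = i) s = []"
    using v i unfolding valid_stream_def valid_update_def by (auto simp: filter_empty_conv)
  then show ?thesis unfolding freq_def by simp
qed

lemma main:
  fixes A :: "real \<Rightarrow> real \<Rightarrow> 'r salg" and M :: "real \<Rightarrow> real \<Rightarrow> nat"
    and f :: "(nat \<Rightarrow> int) \<Rightarrow> real" and n m \<alpha> k :: nat and \<epsilon> \<delta> :: real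
  assumes a2: "\<alpha> \<ge> 2"
    and frange: "\<forall>v. (\<forall>i\<ge>n. v i = 0) \<longrightarrow> f v = 0 \<or> (1 \<le> f v \<and> f v \<le> real \<alpha>)"
    and hypA: "\<forall>\<epsilon> \<delta>. 0 < \<epsilon> \<and> \<epsilon> < 1 \<and> 0 < \<delta> \<and> \<delta> < 1 \<longrightarrow>
        order_invariant n m (A \<epsilon> \<delta>) \<and> uses_space n m (A \<epsilon> \<delta>) (real (M \<epsilon> \<delta>)) \<and>
        oblivious_correct n m f \<epsilon> \<delta> (A \<epsilon> \<delta>)"
    and e: "0 < \<epsilon>" "\<epsilon> < 1" and d: "0 < \<delta>" "\<delta> < 1/10"
  shows "\<exists>R :: ('r list \<times> nat) salg.
           uses_space n m R
             (real (M (\<epsilon>/3) (1/10)) * 130 *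
               (2 ^ k * (log 2 (real \<alpha>) / \<epsilon>) * log 2 (real m) + log 2 (1/\<delta>))) \<and>
           (\<forall>p0 adv. bounded_adversary n k p0 adv \<longrightarrow>
              pmf (game R adv p0 f \<epsilon> m) True \<ge> 1 - \<delta>)"
proof -
  define g where "g = \<epsilon> / 3"
  define B where "B = A g (1/10)"
  define Ms where "Ms = M g (1/10)"
  have g: "0 < g" "g < 1" using e unfolding g_def by auto
  have hB: "order_invariant n m B" "uses_space n m B (real Ms)" "oblivious_correct n m f g (1/10) B"
    using hypA[rule_format, of g "1/10"] g unfolding B_def Ms_def by auto
  define la where "la = log 2 (real \<alpha>)"
  define lm where "lm = log 2 (real m)"
  define ld where "ld = log 2 (1/\<delta>)"
  define Y where "Y = 2 ^ k * (la / \<epsilon>) * lm"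
  define X where "X = Y + ld"
  have la1: "1 \<le> la"
  proof -
    have "log 2 2 \<le> log 2 (real \<alpha>)" using a2 by (subst log_le_cancel_iff) auto
    then show ?thesis unfolding la_def by simp
  qed
  have ld1: "1 \<le> ld"
  proof -
    have "2 \<le> 1/\<delta>" using d by (simp add: field_simps)
    then have "log 2 2 \<le> log 2 (1/\<delta>)" using d by (subst log_le_cancel_iff) auto
    then show ?thesis unfolding ld_def by simp
  qed
  have lm0: "0 \<le> lm"
  proof (cases "m = 0")
    case True then show ?thesis unfolding lm_def by (simp add: log_def)
  next
    case False then show ?thesis unfolding lm_def by simp
  qed
  have lae: "1 \<le> la / \<epsilon>" using la1 e by (simp add: field_simps)
  have Y0: "0 \<le> Y" unfolding Y_def using lm0 lae by (intro mult_nonneg_nonneg) auto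
  have X1: "1 \<le> X" unfolding X_def using Y0 ld1 by simp
  define T where "T = nat \<lceil>64 * X\<rceil>"
  have T_ge: "64 * X \<le> real T" unfolding T_def by linarith
  have T_le: "real T \<le> 65 * X"
  proof -
    have "real T = real_of_int \<lceil>64 * X\<rceil>" unfolding T_def using X1 by (simp add: of_nat_nat)
    then show ?thesis using of_int_ceiling_le_add_one[of "64 * X"] X1 by linarith
  qed
  define q where "q = nat \<lceil>1 / g\<rceil>"
  define a where "a = nat \<lceil>la\<rceil>"
  define K where "K = q * a + 1"
  have q_ge: "1 / g \<le> real q" unfolding q_def by linarith
  have q_le: "real q \<le> 4 / \<epsilon>"
  proof -
    have "real q = real_of_int \<lceil>1/g\<rceil>" unfolding q_def using g by (simp add: of_nat_nat)
    then have "real q \<le> 1/g + 1" using of_int_ceiling_le_add_one[of "1/g"] by linarith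
    also have "\<dots> = 3/\<epsilon> + 1" unfolding g_def by simp
    also have "\<dots> \<le> 4/\<epsilon>" using e by (simp add: field_simps)
    finally show ?thesis .
  qed
  have a_ge: "la \<le> real a" unfolding a_def by linarith
  have a_le: "real a \<le> 2 * la"
  proof -
    have "real a = real_of_int \<lceil>la\<rceil>" unfolding a_def using la1 by (simp add: of_nat_nat)
    then show ?thesis using of_int_ceiling_le_add_one[of la] la1 by linarith
  qed
  have Kb: "(1+g) * real \<alpha> \<le> (1+g)^K"
  proof -
    have "1 + real q * g \<le> (1+g)^q" using Bernoulli_inequality[of g q] g by simp
    moreover have "2 \<le> 1 + real q * g" using q_ge g by (simp add: field_simps)
    ultimately have q2: "2 \<le> (1+g)^q" by simp
    have "real \<alpha> = 2 powr la" unfolding la_def using a2 by simp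
    also have "\<dots> \<le> 2 powr (real a)" using a_ge by (intro powr_mono) auto
    also have "\<dots> = 2 ^ a" by (simp add: powr_realpow)
    also have "\<dots> \<le> ((1+g)^q)^a" using q2 by (intro power_mono) auto
    also have "\<dots> = (1+g)^(q*a)" by (simp add: power_mult)
    finally have "real \<alpha> \<le> (1+g)^(q*a)" .
    then show ?thesis unfolding K_def using g by simp
  qed
  have K3: "real K + 3 \<le> 12 * (la / \<epsilon>)"
  proof -
    have "real q * real a \<le> (4/\<epsilon>) * (2 * la)"
      using q_le a_le e by (intro mult_mono) auto
    then have "real (q * a) \<le> (4/\<epsilon>) * (2 * la)" by simp
    then have "real (q * a) \<le> 8 * (la / \<epsilon>)" by simp
    then show ?thesis unfolding K_def using lae by simp
  qed
  have g2: "(1+g)^2 \<le> 1 + \<epsilon>"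
  proof -
    have "(1+g)^2 = 1 + 2*g + g*g" by (simp add: power2_eq_square algebra_simps)
    moreover have "g * g \<le> g" using g by (simp add: mult_le_cancel_right1)
    ultimately show ?thesis unfolding g_def by simp
  qed
  define R where "R = robust B Ms T g K"
  define G where "G = insert 0 ((\<lambda>i. (1+g)^i) ` {..K})"
  have fG: "finite G" unfolding G_def by simp
  have spB: "\<forall>r\<in>set_pmf (seed B). \<forall>s. valid_stream n m s \<longrightarrow> length (run B r s) \<le> Ms"
    using hB(2) unfolding uses_space_def by auto
  have supp: "\<rho> \<in> set_pmf (replicate_pmf T (seed B)) \<Longrightarrow>
      length \<rho> = T \<and> (\<forall>r\<in>set \<rho>. \<forall>s'. valid_stream n m s' \<longrightarrow> length (run B r s') \<le> Ms)" for \<rho>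
    using spB by (auto simp: set_replicate_pmf)
  have seedR: "seed R = map_pmf (\<lambda>\<rho>. (\<rho>, 0)) (replicate_pmf T (seed B))"
    unfolding R_def robust_def by simp
  have space: "uses_space n m R
      (real Ms * 130 * (2 ^ k * (log 2 (real \<alpha>) / \<epsilon>) * log 2 (real m) + log 2 (1/\<delta>)))"
    unfolding uses_space_def
  proof (intro ballI allI impI)
    fix r s assume r: "r \<in> set_pmf (seed R)" and v: "valid_stream n m s"
    obtain \<rho> where \<rho>: "\<rho> \<in> set_pmf (replicate_pmf T (seed B))" and r_eq: "r = (\<rho>, 0)"
      using r unfolding seedR by auto
    have len: "length (run R r s) = T * wid Ms"
      unfolding R_def r_eq using len_robust[OF conjunct2[OF supp[OF \<rho>]] v] supp[OF \<rho>] by simp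
    have "real (T * wid Ms) \<le> real Ms * 130 * X"
    proof (cases "Ms = 0")
      case True then show ?thesis by (simp add: wid_def)
    next
      case False
      then have "real (wid Ms) \<le> 2 * real Ms" by (simp add: wid_def)
      then have "real T * real (wid Ms) \<le> (65 * X) * (2 * real Ms)"
        using T_le by (intro mult_mono) auto
      then show ?thesis by (simp add: algebra_simps)
    qed
    then show "real (length (run R r s)) \<le>
        real Ms * 130 * (2 ^ k * (log 2 (real \<alpha>) / \<epsilon>) * log 2 (real m) + log 2 (1/\<delta>))"
      unfolding len X_def Y_def la_def lm_def ld_def .
  qed
  have game_ok: "pmf (game R adv p0 f \<epsilon> m) True \<ge> 1 - \<delta>" if ba: "bounded_adversary n k p0 adv" for p0 adv
  proof (cases "m = 0")
    case True
    have "game R adv p0 f \<epsilon> m = return_pmf True"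
      unfolding game_def \<open>m = 0\<close> by simp
    then show ?thesis using d by simp
  next
    case False
    then have m1: "1 \<le> m" by simp
    have adv_ok: "\<forall>p y. length p \<le> k \<longrightarrow> (\<forall>pu\<in>set_pmf (adv p y). length (fst pu) \<le> k \<and> valid_update n (snd pu))"
      and p0k: "length p0 \<le> k" using ba unfolding bounded_adversary_def by auto
    have Gr: "\<forall>r\<in>set_pmf (seed R). \<forall>s. valid_stream n m s \<longrightarrow> est R r (run R r s) \<in> G"
    proof (intro ballI allI impI)
      fix r s assume r: "r \<in> set_pmf (seed R)" and v: "valid_stream n m s"
      obtain \<rho> where \<rho>: "\<rho> \<in> set_pmf (replicate_pmf T (seed B))" and r_eq: "r = (\<rho>, 0)"
        using r unfolding seedR by auto
      show "est R r (run R r s) \<in> G"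
        unfolding R_def r_eq est_robust[OF conjunct2[OF supp[OF \<rho>]] v] G_def by (rule rnd_range)
    qed
    have beta: "\<forall>w. measure_pmf.prob (seed R) {r. \<exists>s. valid_stream n m s \<and> freq s = w \<and>
                    \<not> mult_approx \<epsilon> (f w) (est R r (run R r s))} \<le> (3/5)^T"
    proof
      fix w
      show "measure_pmf.prob (seed R) {r. \<exists>s. valid_stream n m s \<and> freq s = w \<and>
                    \<not> mult_approx \<epsilon> (f w) (est R r (run R r s))} \<le> (3/5)^T"
      proof (cases "\<exists>s0. valid_stream n m s0 \<and> freq s0 = w")
        case False
        then have "{r. \<exists>s. valid_stream n m s \<and> freq s = w \<and>
                    \<not> mult_approx \<epsilon> (f w) (est R r (run R r s))} = {}" (is "?S = {}") by auto
        show ?thesis unfolding \<open>?S = {}\<close> by simp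
      next
        case True
        then obtain s0 where v0: "valid_stream n m s0" and w0: "freq s0 = w" by blast
        define bad where "bad r = (\<not> mult_approx g (f w) (est B r (run B r s0)))" for r
        have fw: "f w = 0 \<or> (1 \<le> f w \<and> f w \<le> real \<alpha>)"
          using frange freq_outside[OF v0] w0 by auto
        have pbad: "measure_pmf.prob (seed B) {r. bad r} \<le> 1/10"
        proof -
          have "1 - 1/10 \<le> measure_pmf.prob (seed B) {r. mult_approx g (f w) (est B r (run B r s0))}"
            using hB(3) v0 w0 unfolding oblivious_correct_def by auto
          moreover have "{r. bad r} = UNIV - {r. mult_approx g (f w) (est B r (run B r s0))}"
            unfolding bad_def by auto
          ultimately show ?thesis using measure_pmf.prob_compl[of "{r. mult_approx g (f w) (est B r (run B r s0))}" "seed B"]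
            by simp
        qed
        have key: "real T \<le> 2 * real (length (filter bad \<rho>))"
          if \<rho>: "\<rho> \<in> set_pmf (replicate_pmf T (seed B))"
             and inS: "\<exists>s. valid_stream n m s \<and> freq s = w \<and> \<not> mult_approx \<epsilon> (f w) (est R (\<rho>, 0) (run R (\<rho>, 0) s))"
          for \<rho>
        proof (rule ccontr)
          assume nk: "\<not> real T \<le> 2 * real (length (filter bad \<rho>))"
          obtain s where v: "valid_stream n m s" and ws: "freq s = w"
            and nm: "\<not> mult_approx \<epsilon> (f w) (est R (\<rho>, 0) (run R (\<rho>, 0) s))" using inS by blast
          have lenT: "length \<rho> = T" using supp[OF \<rho>] by simp
          have runeq: "run B r s = run B r s0" for r
          proof -
            have oi: "\<forall>r s1 s2. valid_stream n m s1 \<longrightarrow> valid_stream n m s2 \<longrightarrow> freq s1 = freq s2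
                \<longrightarrow> run B r s1 = run B r s2" using hB(1) unfolding order_invariant_def .
            have "freq s = freq s0" using ws w0 by simp
            then show ?thesis using oi v v0 by blast
          qed
          define zs where "zs = map (\<lambda>r. est B r (run B r s0)) \<rho>"
          have e1: "est R (\<rho>, 0) (run R (\<rho>, 0) s) = rnd g K (med zs)"
            unfolding R_def est_robust[OF conjunct2[OF supp[OF \<rho>]] v] zs_def runeq ..
          have cnt: "length (filter (mult_approx g (f w)) zs) = length (filter (\<lambda>r. \<not> bad r) \<rho>)"
            unfolding zs_def bad_def by (simp add: filter_map o_def)
          have sum: "length (filter bad \<rho>) + length (filter (\<lambda>r. \<not> bad r) \<rho>) = T"
            using sum_length_filter_compl[of bad \<rho>] lenT by simp
          have maj: "length zs < 2 * length (filter (mult_approx g (f w)) zs)"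
            using nk sum cnt lenT unfolding zs_def by simp
          have "mult_approx g (f w) (med zs)"
            by (rule med_correct[OF maj]) (rule mult_approx_conv)
          then have "mult_approx \<epsilon> (f w) (rnd g K (med zs))"
            by (intro rnd_correct[OF g(1) g2 fw Kb])
          then show False using nm e1 by simp
        qed
        have "measure_pmf.prob (seed R) {r. \<exists>s. valid_stream n m s \<and> freq s = w \<and>
                    \<not> mult_approx \<epsilon> (f w) (est R r (run R r s))}
            = measure_pmf.prob (replicate_pmf T (seed B)) {\<rho>. \<exists>s. valid_stream n m s \<and> freq s = w \<and>
                    \<not> mult_approx \<epsilon> (f w) (est R (\<rho>, 0) (run R (\<rho>, 0) s))}"
          unfolding seedR measure_map_pmf vimage_def mem_Collect_eq ..
        also have "\<dots> \<le> measure_pmf.prob (replicate_pmf T (seed B)) {\<rho>. real T \<le> 2 * real (length (filter bad \<rho>))}"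
        proof (rule measure_pmf.finite_measure_mono_AE)
          show "AE \<rho> in measure_pmf (replicate_pmf T (seed B)).
              \<rho> \<in> {\<rho>. \<exists>s. valid_stream n m s \<and> freq s = w \<and>
                    \<not> mult_approx \<epsilon> (f w) (est R (\<rho>, 0) (run R (\<rho>, 0) s))} \<longrightarrow>
              \<rho> \<in> {\<rho>. real T \<le> 2 * real (length (filter bad \<rho>))}"
          proof (rule AE_pmfI)
            fix \<rho> assume "\<rho> \<in> set_pmf (replicate_pmf T (seed B))"
            then show "\<rho> \<in> {\<rho>. \<exists>s. valid_stream n m s \<and> freq s = w \<and>
                    \<not> mult_approx \<epsilon> (f w) (est R (\<rho>, 0) (run R (\<rho>, 0) s))} \<longrightarrow>
              \<rho> \<in> {\<rho>. real T \<le> 2 * real (length (filter bad \<rho>))}"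
              using key by blast
          qed
        qed simp
        also have "\<dots> \<le> (3/5)^T" by (rule chernoff_half[OF pbad])
        finally show ?thesis .
      qed
    qed
    define N where "N = card ({p :: bool list. length p \<le> k} \<times> insert None (Some ` G))"
    have gb: "pmf (game R adv p0 f \<epsilon> m) False \<le> real m ^ N * (3/5)^T"
      unfolding N_def by (rule game_bound[OF adv_ok p0k Gr fG beta m1])
    have N_le: "real N \<le> 24 * (2^k * (la / \<epsilon>))"
    proof -
      have cG: "card G \<le> K + 2"
      proof -
        have "card G \<le> Suc (card ((\<lambda>i. (1+g)^i) ` {..K}))" unfolding G_def by (simp add: card_insert_if)
        also have "card ((\<lambda>i. (1+g)^i) ` {..K}) \<le> Suc K" using card_image_le[of "{..K}" "\<lambda>i. (1+g)^i"] by simp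
        finally show ?thesis by simp
      qed
      have cY: "card (insert None (Some ` G)) \<le> K + 3"
      proof -
        have "card (insert None (Some ` G)) \<le> Suc (card (Some ` G))" using fG by (simp add: card_insert_if)
        also have "card (Some ` G) \<le> card G" by (rule card_image_le[OF fG])
        finally show ?thesis using cG by simp
      qed
      have "N = card {p :: bool list. length p \<le> k} * card (insert None (Some ` G))"
        unfolding N_def by (rule card_cartesian_product)
      also have "\<dots> \<le> 2 ^ Suc k * (K + 3)" by (intro mult_mono card_bool_lists_le cY) auto
      finally have "real N \<le> real (2 ^ Suc k * (K + 3))" by linarith
      also have "\<dots> = 2 * 2^k * (real K + 3)" by simp
      also have "\<dots> \<le> 2 * 2^k * (12 * (la / \<epsilon>))" using K3 by (intro mult_left_mono) auto
      finally show ?thesis by simp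
    qed
    have num: "real m ^ N * (3/5)^T \<le> \<delta>"
    proof -
      define L where "L = ln (2::real)"
      have L0: "0 < L" unfolding L_def by simp
      have lnm: "ln (real m) = lm * L" unfolding lm_def L_def log_def by simp
      have lnd: "ln \<delta> = - (ld * L)" unfolding ld_def L_def log_def using d by (simp add: ln_div)
      have ln35: "ln (3/5::real) \<le> - L / 2"
      proof -
        have "2 * ln (3/5::real) = ln ((3/5)^2)" by (simp add: ln_realpow)
        also have "\<dots> \<le> ln (1/2)" by (subst ln_le_cancel_iff) (auto simp: power2_eq_square)
        also have "\<dots> = - L" unfolding L_def by (simp add: ln_div)
        finally show ?thesis by simp
      qed
      have t1: "real N * ln (real m) \<le> 24 * (Y * L)"
      proof -
        have "real N * (lm * L) \<le> (24 * (2^k * (la / \<epsilon>))) * (lm * L)"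
          using N_le lm0 L0 by (intro mult_right_mono) auto
        then show ?thesis unfolding lnm Y_def by (simp add: algebra_simps)
      qed
      have t2: "real T * ln (3/5) \<le> - 32 * (Y * L) - 32 * (ld * L)"
      proof -
        have "real T * ln (3/5) \<le> real T * (- L / 2)" using ln35 by (intro mult_left_mono) auto
        also have "\<dots> \<le> (64 * X) * (- L / 2)" using T_ge L0 by (intro mult_right_mono_neg) auto
        finally show ?thesis unfolding X_def by (simp add: algebra_simps)
      qed
      have YL: "0 \<le> Y * L" using Y0 L0 by simp
      have ldL: "0 \<le> ld * L" using ld1 L0 by simp
      have tot: "real N * ln (real m) + real T * ln (3/5) \<le> ln \<delta>"
        using t1 t2 YL ldL lnd by linarith
      have "real m ^ N * (3/5)^T = exp (real N * ln (real m) + real T * ln (3/5))"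
        using m1 by (simp add: exp_add exp_of_nat_mult)
      also have "\<dots> \<le> exp (ln \<delta>)" using tot by simp
      also have "\<dots> = \<delta>" using d by simp
      finally show ?thesis .
    qed
    have "pmf (game R adv p0 f \<epsilon> m) True + pmf (game R adv p0 f \<epsilon> m) False = 1"
    proof -
      have "(\<Sum>b\<in>UNIV. pmf (game R adv p0 f \<epsilon> m) b) = 1" by (rule sum_pmf_eq_1) auto
      then show ?thesis by (simp add: UNIV_bool add.commute)
    qed
    then show ?thesis using gb num by simp
  qed
  show ?thesis
    using space game_ok unfolding Ms_def g_def by blast
qed

theorem theorem6p4:
  shows "\<exists>C>(0::real). \<forall>(n::nat) (m::nat) (\<alpha>::nat) (f::(nat \<Rightarrow> int) \<Rightarrow> real)
            (A::real \<Rightarrow> real \<Rightarrow> 'r salg) (M::real \<Rightarrow> real \<Rightarrow> nat).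
     \<alpha> \<ge> 2 \<longrightarrow>
     (\<forall>v. (\<forall>i\<ge>n. v i = 0) \<longrightarrow> f v = 0 \<or> (1 \<le> f v \<and> f v \<le> real \<alpha>)) \<longrightarrow>
     (\<forall>\<epsilon> \<delta>. 0 < \<epsilon> \<and> \<epsilon> < 1 \<and> 0 < \<delta> \<and> \<delta> < 1 \<longrightarrow>
        order_invariant n m (A \<epsilon> \<delta>) \<and> uses_space n m (A \<epsilon> \<delta>) (real (M \<epsilon> \<delta>)) \<and>
        oblivious_correct n m f \<epsilon> \<delta> (A \<epsilon> \<delta>)) \<longrightarrow>
     (\<forall>\<epsilon> \<delta> (k::nat). 0 < \<epsilon> \<and> \<epsilon> < 1 \<and> 0 < \<delta> \<and> \<delta> < 1/10 \<longrightarrow>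
        (\<exists>R :: ('r list \<times> nat) salg.
           uses_space n m R
             (real (M (\<epsilon>/3) (1/10)) * C *
               (2 ^ k * (log 2 (real \<alpha>) / \<epsilon>) * log 2 (real m) + log 2 (1/\<delta>))) \<and>
           (\<forall>p0 adv. bounded_adversary n k p0 adv \<longrightarrow>
              pmf (game R adv p0 f \<epsilon> m) True \<ge> 1 - \<delta>)))"
proof -
  show ?thesis
    apply (rule exI[of _ 130])
    apply (intro conjI allI impI)
     apply simp
    apply (rule main)
         apply auto
    done
qed

end
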